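(* Let $m\ge1$, $N\ge1$, let $F_1,\ldots,F_m:\{0,\ldots,2^N-1\}^m\to\{0,\ldots,2^N-1\}$ be arbitrary, and let $g=(g_1,\ldots,g_m)$ be the map on the decimal representation described in the context. Then at every point, with the integer parts $x_1,\ldots,x_m$ and the first sequence terms $w_1^1,\ldots,w_m^1$ held fixed, one has $\partial g_i/\partial y_i=2^N$ and $\partial g_i/\partial y_j=0$ for $i\neq j$, so the Jacobian matrix is $J=\mathrm{diag}(2^N,\ldots,2^N)$; consequently, with $\Phi_n=J^n$ and $\mu_k(\Phi_n^T\Phi_n)$ the $k$-th eigenvalue of $\Phi_n^T\Phi_n$, every Lyapunov exponent $\lambda(y_k)=\lim_{n\to+\infty}\frac{1}{2n}\ln|\mu_k(\Phi_n^T\Phi_n)|$, $k=1,\ldots,m$, equals $N\ln 2$.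
   Context: Take $Q=0$, $P=N$, so $D=\{0,1,\ldots,2^N-1\}$, each element written with $N$ binary digits; $x\cdot y$, $x+y$, $\overline{x}$ denote bitwise AND, OR and NOT on $N$-bit strings. A state consists of sequences $w_i=w_i^1w_i^2\ldots$ with $w_i^k\in D$ ($i=1,\ldots,m$) and integers $x_1,\ldots,x_m\in D$; one iteration maps it to the state with sequences $\sigma(w_i)=w_i^2w_i^3\ldots$ and integers $x_i'=(x_i\cdot\overline{w_i^1})+(F_i(x_1,\ldots,x_m)\cdot w_i^1)$. The decimal representation of a state is $y=(y_1,\ldots,y_m)$ with $y_i=x_i+\sum_{k=1}^{\infty}w_i^k2^{-Nk}$, and the induced map is $g_i(y_1,\ldots,y_m)=(x_i\cdot\overline{w_i^1})+(F_i(x_1,\ldots,x_m)\cdot w_i^1)+2^N\sum_{k=2}^{\infty}w_i^k2^{-Nk}$, i.e. the decimal representation of the image state. Partial derivatives are taken by varying only the tail terms $w_i^k$, $k\ge2$ (so that the integer parts and the first terms $w_i^1$ stay unchanged). *)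

theory Defs
  imports Complex_Main "Jordan_Normal_Form.Char_Poly"
begin

text \<open>States: integer parts xs (list of length m, entries in D = {0..2^N-1}) and
 sequences ws (list of length m, each a sequence nat => nat whose terms w^k, k >= 1,
 lie in D; the value at index 0 is unused).\<close>

definition valid_state :: "nat \<Rightarrow> nat \<Rightarrow> nat list \<Rightarrow> (nat \<Rightarrow> nat) list \<Rightarrow> bool" where
  "valid_state N m xs ws \<longleftrightarrow> length xs = m \<and> length ws = m \<and>
     (\<forall>i<m. xs ! i < 2 ^ N \<and> (\<forall>k\<ge>1. (ws ! i) k < 2 ^ N))"

text \<open>Bitwise NOT on N-bit strings (for arguments in D).\<close>
definition bnot :: "nat \<Rightarrow> nat \<Rightarrow> nat" where
  "bnot N w = 2 ^ N - 1 - w"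

definition new_int :: "nat \<Rightarrow> (nat \<Rightarrow> nat list \<Rightarrow> nat) \<Rightarrow> nat list \<Rightarrow> (nat \<Rightarrow> nat) list \<Rightarrow> nat \<Rightarrow> nat" where
  "new_int N F xs ws i =
     Bit_Operations.or (Bit_Operations.and (xs ! i) (bnot N ((ws ! i) 1)))
                       (Bit_Operations.and (F i xs) ((ws ! i) 1))"

definition decrep :: "nat \<Rightarrow> nat list \<Rightarrow> (nat \<Rightarrow> nat) list \<Rightarrow> nat \<Rightarrow> real" where
  "decrep N xs ws i = real (xs ! i) + (\<Sum>k. real ((ws ! i) (Suc k)) / 2 ^ (N * Suc k))"

text \<open>g_i on a state: decimal representation of the image state.\<close>
definition gmap :: "nat \<Rightarrow> (nat \<Rightarrow> nat list \<Rightarrow> nat) \<Rightarrow> nat list \<Rightarrow> (nat \<Rightarrow> nat) list \<Rightarrow> nat \<Rightarrow> real" where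
  "gmap N F xs ws i = real (new_int N F xs ws i)
      + 2 ^ N * (\<Sum>k. real ((ws ! i) (k + 2)) / 2 ^ (N * (k + 2)))"

definition same_head :: "nat \<Rightarrow> nat \<Rightarrow> nat list \<Rightarrow> (nat \<Rightarrow> nat) list \<Rightarrow> (nat \<Rightarrow> nat) list \<Rightarrow> bool" where
  "same_head N m xs ws ws' \<longleftrightarrow> valid_state N m xs ws' \<and> (\<forall>i<m. (ws' ! i) 1 = (ws ! i) 1)"

definition tail_class :: "nat \<Rightarrow> nat \<Rightarrow> nat list \<Rightarrow> (nat \<Rightarrow> nat) list \<Rightarrow> (nat \<Rightarrow> real) set" where
  "tail_class N m xs ws = {y. \<exists>ws'. same_head N m xs ws ws' \<and> (\<forall>i<m. decrep N xs ws' i = y i)}"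

text \<open>The induced map g as a function of y, with integer parts and first terms fixed.\<close>
definition gfix :: "nat \<Rightarrow> nat \<Rightarrow> (nat \<Rightarrow> nat list \<Rightarrow> nat) \<Rightarrow> nat list \<Rightarrow> (nat \<Rightarrow> nat) list
     \<Rightarrow> (nat \<Rightarrow> real) \<Rightarrow> nat \<Rightarrow> real" where
  "gfix N m F xs ws y = gmap N F xs
      (SOME ws'. same_head N m xs ws ws' \<and> (\<forall>i<m. decrep N xs ws' i = y i))"

definition shift :: "(nat \<Rightarrow> real) \<Rightarrow> nat \<Rightarrow> real \<Rightarrow> nat \<Rightarrow> real" where
  "shift y j t = (\<lambda>l. if l = j then y l + t else y l)"

end

theory Submission
  imports Defs
begin

lemma dsum: "i < (m::nat) \<Longrightarrow> (\<Sum>ia=0..<m. a*(if ia=i then 1 else 0)*(b*(if ia=j then 1 else 0))) = (if i=j then a*b else (0::real))"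
proof -
  assume i: "i < m"
  have "(\<Sum>ia=0..<m. a*(if ia=i then 1 else 0)*(b*(if ia=j then 1 else 0)))
     = (\<Sum>ia=0..<m. if ia = i then (if i=j then a*b else 0) else 0)"
    by (rule sum.cong) auto
  also have "\<dots> = (if i=j then a*b else 0)" using i by simp
  finally show ?thesis .
qed
lemma mJ: "((a::real) \<cdot>\<^sub>m 1\<^sub>m m) * (b \<cdot>\<^sub>m 1\<^sub>m m) = (a*b) \<cdot>\<^sub>m 1\<^sub>m m"
  by (rule eq_matI) (auto simp: scalar_prod_def dsum)
lemma tJ1: "transpose_mat ((c::real) \<cdot>\<^sub>m 1\<^sub>m m) = c \<cdot>\<^sub>m 1\<^sub>m m"
  by (rule eq_matI) auto
lemma powJ: "((c::real) \<cdot>\<^sub>m 1\<^sub>m m) ^\<^sub>m n = (c^n) \<cdot>\<^sub>m 1\<^sub>m m"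
proof (induction n)
  case 0 then show ?case by simp (rule eq_matI, auto)
next
  case (Suc n)
  show ?case by (simp add: Suc mJ mult.commute)
qed
lemma eig: assumes "eigenvalue ((d::real) \<cdot>\<^sub>m 1\<^sub>m m) \<mu>" shows "\<mu> = d"
proof -
  obtain v where v: "v \<in> carrier_vec m" "v \<noteq> 0\<^sub>v m" "(d \<cdot>\<^sub>m 1\<^sub>m m) *\<^sub>v v = \<mu> \<cdot>\<^sub>v v"
    using assms unfolding eigenvalue_def eigenvector_def by auto
  then obtain i where i: "i < m" "v $ i \<noteq> 0" by (metis carrier_vecD eq_vecI index_zero_vec)
  have "(\<Sum>ia=0..<m. d*(if ia=i then 1 else 0)*v$ia) = (\<Sum>ia=0..<m. if ia = i then d*v$ia else 0)"
    by (rule sum.cong) auto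
  also have "\<dots> = d * v $ i" using i by simp
  finally have "((d \<cdot>\<^sub>m 1\<^sub>m m) *\<^sub>v v) $ i = d * v $ i" using i v(1)
    by (simp add: scalar_prod_def)
  moreover have "((d \<cdot>\<^sub>m 1\<^sub>m m) *\<^sub>v v) $ i = \<mu> * v $ i" using v(3) i v(1) by simp
  ultimately show ?thesis using i by simp
qed

lemma summ_tail:
  assumes w: "\<forall>k\<ge>1. w k < (2::nat) ^ N" and N: "N \<ge> 1"
  shows "summable (\<lambda>k. real (w (Suc k)) / 2 ^ (N * Suc k))"
proof (rule summable_comparison_test')
  show "summable (\<lambda>k. (1/2::real) ^ k)" by (rule summable_geometric) simp
next
  fix k :: nat
  have "w (Suc k) < 2 ^ N" using w by simp
  hence "real (w (Suc k)) < real (2 ^ N)" by (simp only: of_nat_less_iff)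
  hence "real (w (Suc k)) \<le> 2 ^ N" by simp
  hence "real (w (Suc k)) / 2 ^ (N * Suc k) \<le> 2 ^ N / 2 ^ (N * Suc k)"
    by (simp add: divide_right_mono)
  also have "\<dots> = 1 / 2 ^ (N * k)" by (simp add: power_add)
  also have "\<dots> \<le> 1 / 2 ^ k"
  proof -
    have "(2::real) ^ k \<le> 2 ^ (N * k)" by (rule power_increasing) (use N in auto)
    thus ?thesis by (simp add: frac_le)
  qed
  also have "\<dots> = (1/2) ^ k" by (simp add: power_one_over)
  finally show "norm (real (w (Suc k)) / 2 ^ (N * Suc k)) \<le> (1/2) ^ k" by simp
qed

lemma split_tail:
  assumes w: "\<forall>k\<ge>1. w k < (2::nat) ^ N" and N: "N \<ge> 1"
  shows "(\<Sum>k. real (w (Suc k)) / 2 ^ (N * Suc k)) =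
     real (w 1) / 2 ^ N + (\<Sum>k. real (w (k + 2)) / 2 ^ (N * (k + 2)))"
proof -
  have s: "summable (\<lambda>k. real (w (Suc k)) / 2 ^ (N * Suc k))" by (rule summ_tail[OF w N])
  have "(\<Sum>k. real (w (Suc (Suc k))) / 2 ^ (N * Suc (Suc k))) =
        (\<Sum>k. real (w (Suc k)) / 2 ^ (N * Suc k)) - real (w 1) / 2 ^ N"
    using suminf_split_head[OF s] by simp
  moreover have "(\<lambda>k. real (w (Suc (Suc k))) / 2 ^ (N * Suc (Suc k))) =
      (\<lambda>k. real (w (k + 2)) / 2 ^ (N * (k + 2)))" by (simp add: numeral_2_eq_2)
  ultimately show ?thesis by simp
qed

lemma gmap_eq:
  assumes v: "valid_state N m xs ws'" and i: "i < m" and N: "N \<ge> 1"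
  shows "gmap N F xs ws' i = real (new_int N F xs ws' i)
     + 2 ^ N * (decrep N xs ws' i - real (xs ! i) - real ((ws' ! i) 1) / 2 ^ N)"
proof -
  have w: "\<forall>k\<ge>1. (ws' ! i) k < (2::nat) ^ N" using v i unfolding valid_state_def by auto
  show ?thesis unfolding gmap_def decrep_def split_tail[OF w N]
    by (simp add: algebra_simps)
qed

lemma new_int_eq: "(ws' ! i) 1 = (ws ! i) 1 \<Longrightarrow> new_int N F xs ws' i = new_int N F xs ws i"
  unfolding new_int_def by simp

lemma Jdiag: "mat m m (\<lambda>(i, j). if i = j then (2::real) ^ N else 0) = (2 ^ N) \<cdot>\<^sub>m 1\<^sub>m m"
  by (rule eq_matI) auto

theorem mainTheorem5:
  fixes N m :: nat and F :: "nat \<Rightarrow> nat list \<Rightarrow> nat"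
  assumes "m \<ge> 1" and "N \<ge> 1"
    and "\<forall>i<m. \<forall>xs. length xs = m \<and> (\<forall>j<m. xs ! j < 2 ^ N) \<longrightarrow> F i xs < 2 ^ N"
  shows "let J = mat m m (\<lambda>(i, j). if i = j then (2::real) ^ N else 0) in
     (\<forall>xs ws. valid_state N m xs ws \<longrightarrow> (\<forall>i<m. \<forall>j<m.
        ((\<lambda>t. gfix N m F xs ws (shift (decrep N xs ws) j t) i)
           has_real_derivative (J $$ (i, j)))
         (at 0 within {t. shift (decrep N xs ws) j t \<in> tail_class N m xs ws})))
   \<and> (\<forall>\<mu> :: nat \<Rightarrow> real.
        (\<forall>n. eigenvalue (transpose_mat (J ^\<^sub>m n) * (J ^\<^sub>m n)) (\<mu> n)) \<longrightarrow>
        (\<lambda>n. ln \<bar>\<mu> n\<bar> / (2 * real n)) \<longlonglongrightarrow> real N * ln 2)"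
  proof -
  define J where "J = mat m m (\<lambda>(i, j). if i = j then (2::real) ^ N else 0)"
  have P1: "\<forall>xs ws. valid_state N m xs ws \<longrightarrow> (\<forall>i<m. \<forall>j<m.
        ((\<lambda>t. gfix N m F xs ws (shift (decrep N xs ws) j t) i)
           has_real_derivative (J $$ (i, j)))
         (at 0 within {t. shift (decrep N xs ws) j t \<in> tail_class N m xs ws}))"
  proof (intro allI impI)
    fix xs ws i j assume v: "valid_state N m xs ws" and i: "i < m" and j: "j < m"
    define y where "y = decrep N xs ws"
    define S where "S = {t. shift y j t \<in> tail_class N m xs ws}"
    define h where "h = (\<lambda>t. real (new_int N F xs ws i)
       + 2 ^ N * (y i + (if i = j then t else 0) - real (xs ! i) - real ((ws ! i) 1) / 2 ^ N))"
    have hd: "(h has_real_derivative J $$ (i, j)) (at 0 within S)"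
    proof (cases "i = j")
      case True
      have "(h has_real_derivative (0 + 2 ^ N * (0 + 1 - 0 - 0))) (at 0 within S)"
        unfolding h_def using True by (intro derivative_eq_intros) auto
      thus ?thesis using True i j unfolding J_def by simp
    next
      case False
      have "(h has_real_derivative (0 + 2 ^ N * (0 + 0 - 0 - 0))) (at 0 within S)"
        unfolding h_def using False by (intro derivative_eq_intros) auto
      thus ?thesis using False i j unfolding J_def by simp
    qed
    have y0: "shift y j 0 = y" unfolding shift_def by auto
    have S0: "0 \<in> S" unfolding S_def tail_class_def same_head_def y0 using v by (auto intro!: exI[of _ ws] simp: y_def shift_def)
    have eq: "h t = gfix N m F xs ws (shift y j t) i" if t: "t \<in> S" for t
    proof -
      let ?P = "\<lambda>ws'. same_head N m xs ws ws' \<and> (\<forall>i<m. decrep N xs ws' i = shift y j t i)"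
      have "\<exists>ws'. ?P ws'" using t unfolding S_def tail_class_def by auto
      hence P: "?P (SOME ws'. ?P ws')" by (rule someI_ex)
      define ws' where "ws' = (SOME ws'. ?P ws')"
      have P': "?P ws'" using P unfolding ws'_def .
      have g: "gfix N m F xs ws (shift y j t) i = gmap N F xs ws' i"
        unfolding gfix_def ws'_def by simp
      have v': "valid_state N m xs ws'" and h1: "(ws' ! i) 1 = (ws ! i) 1"
        using P' i unfolding same_head_def by auto
      have d: "decrep N xs ws' i = y i + (if i = j then t else 0)"
        using P' i unfolding shift_def by auto
      show ?thesis unfolding g gmap_eq[OF v' i assms(2)] new_int_eq[OF h1] d h1 h_def by simp
    qed
    have "((\<lambda>t. gfix N m F xs ws (shift y j t) i) has_real_derivative J $$ (i, j)) (at 0 within S)"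
      by (rule has_field_derivative_transform_within[OF hd _ S0, where d=1]) (simp_all add: eq)
    thus "((\<lambda>t. gfix N m F xs ws (shift (decrep N xs ws) j t) i)
           has_real_derivative (J $$ (i, j)))
         (at 0 within {t. shift (decrep N xs ws) j t \<in> tail_class N m xs ws})"
      unfolding y_def S_def .
  qed
  have P2: "\<forall>\<mu> :: nat \<Rightarrow> real.
        (\<forall>n. eigenvalue (transpose_mat (J ^\<^sub>m n) * (J ^\<^sub>m n)) (\<mu> n)) \<longrightarrow>
        (\<lambda>n. ln \<bar>\<mu> n\<bar> / (2 * real n)) \<longlonglongrightarrow> real N * ln 2"
  proof (intro allI impI)
    fix \<mu> :: "nat \<Rightarrow> real"
    assume e: "\<forall>n. eigenvalue (transpose_mat (J ^\<^sub>m n) * (J ^\<^sub>m n)) (\<mu> n)"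
    have mu: "\<mu> n = (2::real) ^ (2 * N * n)" for n
    proof -
      have "transpose_mat (J ^\<^sub>m n) * (J ^\<^sub>m n) = ((2 ^ N) ^ n * (2 ^ N) ^ n) \<cdot>\<^sub>m 1\<^sub>m m"
        unfolding J_def Jdiag powJ tJ1 mJ ..
      hence "\<mu> n = (2 ^ N) ^ n * (2 ^ N) ^ n" using e eig by metis
      thus ?thesis by (simp add: power_mult[symmetric] power_add[symmetric] mult_2 add_mult_distrib)
    qed
    have ev: "\<forall>\<^sub>F n in sequentially. real N * ln 2 = ln \<bar>\<mu> n\<bar> / (2 * real n)"
      using eventually_ge_at_top[of "1::nat"]
    proof eventually_elim
      case (elim n)
      have "ln \<bar>\<mu> n\<bar> = real (2 * N * n) * ln 2" unfolding mu by (simp add: ln_realpow)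
      thus ?case using elim by (simp add: field_simps)
    qed
    show "(\<lambda>n. ln \<bar>\<mu> n\<bar> / (2 * real n)) \<longlonglongrightarrow> real N * ln 2"
      by (rule Lim_transform_eventually[OF tendsto_const ev])
  qed
  show ?thesis unfolding Let_def J_def[symmetric] using P1 P2 by blast
qed

end
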